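(* For every vertex $v$ of $G^{(\rho)}_{n,\ell}$, there are at least $n^{\Omega(\log\ell)}$ directed paths starting or ending at $v$.
   Context: The instance $G^{(\rho)}_{n,\ell}$ (with $\rho>0$ a small constant): integers $m$ and $1/\epsilon$ with $\epsilon\rho m\in\mathbb N$, $\ell=3/\epsilon$, $\epsilon m=\omega(\log m)$; ground set $[m]$. Layers $L_0,\dots,L_\ell$: $L_0=\{s\}$ with label $\emptyset$; for $1\le i<2/\epsilon$, $L_i$ has one vertex for each subset of $[m]$ of size $i\epsilon\rho m$ (its label); for $2/\epsilon\le i\le 3/\epsilon$, one vertex for each subset of size $(4-i\epsilon)\rho m$. For $u\in L_{i-1},v\in L_i$ there is an edge $(u,v)$ iff $S_u\subseteq S_v$ (if $i\le 2/\epsilon$) or $S_v\subseteq S_u$ (if $i>2/\epsilon$), where $S_w$ is the label of $w$. $n$ is the number of vertices, $n=2^{\Theta(m)}$. *)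

theory Defs
  imports Complex_Main
begin

text \<open>Parameters: m (ground set [m] = {1..m}),
  k = 1/epsilon (so l = 3k), and d = epsilon*rho*m (a natural number).\<close>

definition layer_size :: "nat \<Rightarrow> nat \<Rightarrow> nat \<Rightarrow> nat" where
  "layer_size k d i = (if i < 2 * k then i * d else (4 * k - i) * d)"

definition Gverts :: "nat \<Rightarrow> nat \<Rightarrow> nat \<Rightarrow> (nat \<times> nat set) set" where
  "Gverts m k d = {(i, S). i \<le> 3 * k \<and> S \<subseteq> {1..m} \<and> card S = layer_size k d i}"

definition Gedge :: "nat \<Rightarrow> nat \<Rightarrow> nat \<Rightarrow> (nat \<times> nat set) \<Rightarrow> (nat \<times> nat set) \<Rightarrow> bool" where
  "Gedge m k d u v \<longleftrightarrow> u \<in> Gverts m k d \<and> v \<in> Gverts m k d \<and> fst v = fst u + 1 \<and>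
     (if fst v \<le> 2 * k then snd u \<subseteq> snd v else snd v \<subseteq> snd u)"

definition Gpaths :: "nat \<Rightarrow> nat \<Rightarrow> nat \<Rightarrow> (nat \<times> nat set) list set" where
  "Gpaths m k d = {p. length p \<ge> 2 \<and> (\<forall>j. Suc j < length p \<longrightarrow> Gedge m k d (p ! j) (p ! Suc j))}"

definition paths_at :: "nat \<Rightarrow> nat \<Rightarrow> nat \<Rightarrow> (nat \<times> nat set) \<Rightarrow> (nat \<times> nat set) list set" where
  "paths_at m k d v = {p \<in> Gpaths m k d. hd p = v \<or> last p = v}"

end

theory Submission
  imports Defs
begin

definition walks :: "('a \<Rightarrow> 'a \<Rightarrow> bool) \<Rightarrow> nat \<Rightarrow> 'a \<Rightarrow> 'a list set" where
  "walks R t v = {p. length p = Suc t \<and> hd p = v \<and> (\<forall>j. Suc j < length p \<longrightarrow> R (p ! j) (p ! Suc j))}"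

lemma walks_finite:
  assumes "finite A" "\<And>u w. R u w \<Longrightarrow> w \<in> A"
  shows "finite (walks R t v)"
proof (rule finite_subset)
  show "walks R t v \<subseteq> {p. set p \<subseteq> insert v A \<and> length p = Suc t}"
  proof safe
    fix p x assume p: "p \<in> walks R t v" and x: "x \<in> set p" "x \<notin> A"
    then obtain j where j: "j < length p" "p ! j = x" by (auto simp: in_set_conv_nth)
    show "x = v"
    proof (cases j)
      case 0 with p j show ?thesis by (cases p) (auto simp: walks_def)
    next
      case (Suc j') with p j assms(2)[of "p ! j'" "p ! Suc j'"] x show ?thesis by (auto simp: walks_def)
    qed
  qed (auto simp: walks_def)
  show "finite {p. set p \<subseteq> insert v A \<and> length p = Suc t}"
    using assms(1) by (intro finite_lists_length_eq) auto
qed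

lemma walks_Suc:
  "walks R (Suc t) v = (\<Union>w\<in>{w. R v w}. (Cons v) ` walks R t w)"
proof safe
  fix p assume p: "p \<in> walks R (Suc t) v"
  then obtain w q where pq: "p = v # w # q" unfolding walks_def
    by (cases p; cases "tl p") auto
  have "R v w" using p pq unfolding walks_def by force
  moreover have "w # q \<in> walks R t w"
    using p pq unfolding walks_def by auto
  ultimately show "p \<in> (\<Union>w\<in>{w. R v w}. (Cons v) ` walks R t w)" using pq by blast
next
  fix w q assume "R v w" "q \<in> walks R t w"
  then show "v # q \<in> walks R (Suc t) v" unfolding walks_def
    apply (cases q) apply (auto simp: nth_Cons split: nat.splits)
    done
qed

lemma walks_count:
  assumes "finite A" "\<And>u w. R u w \<Longrightarrow> w \<in> A"
    and step: "\<And>t v. P (Suc t) v \<Longrightarrow> B \<le> card {w. R v w \<and> P t w}"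
  shows "P t v \<Longrightarrow> B ^ t \<le> card (walks R t v)"
proof (induction t arbitrary: v)
  case 0
  have "walks R 0 v = {[v]}" unfolding walks_def by (auto simp: length_Suc_conv)
  then show ?case by simp
next
  case (Suc t)
  let ?W = "{w. R v w \<and> P t w}"
  have fW: "finite ?W" using assms(1,2) by (auto intro: finite_subset)
  have "B ^ Suc t = B * B ^ t" by simp
  also have "\<dots> \<le> card ?W * B ^ t" using step[OF Suc.prems] by simp
  also have "\<dots> = (\<Sum>w\<in>?W. B ^ t)" by simp
  also have "\<dots> \<le> (\<Sum>w\<in>?W. card ((Cons v) ` walks R t w))"
    by (intro sum_mono) (simp add: card_image Suc.IH)
  also have "\<dots> = card (\<Union>w\<in>?W. (Cons v) ` walks R t w)"
    by (rule card_UN_disjoint[symmetric])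
       (use fW walks_finite[OF assms(1,2)] in \<open>auto simp: walks_def\<close>)
  also have "\<dots> \<le> card (walks R (Suc t) v)"
    unfolding walks_Suc
  proof (intro card_mono)
    have "finite {w. R v w}" using assms(1,2) by (auto intro: finite_subset)
    then show "finite (\<Union>w\<in>{w. R v w}. (Cons v) ` walks R t w)"
      using walks_finite[OF assms(1,2)] by auto
  qed auto
  finally show ?case .
qed

lemma count_up:
  assumes "S \<subseteq> {1..m}" "card S + d \<le> m"
  shows "(m - card S) choose d \<le> card {T. S \<subseteq> T \<and> T \<subseteq> {1..m} \<and> card T = card S + d}"
proof -
  let ?X = "{U. U \<subseteq> {1..m} - S \<and> card U = d}"
  have fS: "finite S" using assms(1) finite_subset by blast
  have "card ?X = card ({1..m} - S) choose d" by (rule n_subsets) simp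
  also have "card ({1..m} - S) = m - card S" using assms(1) by (simp add: card_Diff_subset fS)
  finally have 1: "card ?X = (m - card S) choose d" .
  have inj: "inj_on (\<lambda>U. S \<union> U) ?X"
    proof (rule inj_onI)
    fix U V assume "U \<in> ?X" "V \<in> ?X" "S \<union> U = S \<union> V"
    then have "U = (S \<union> U) - S" "V = (S \<union> V) - S" by auto
    then show "U = V" using \<open>S \<union> U = S \<union> V\<close> by simp
  qed
  have "(\<lambda>U. S \<union> U) ` ?X \<subseteq> {T. S \<subseteq> T \<and> T \<subseteq> {1..m} \<and> card T = card S + d}"
  proof
    fix T assume "T \<in> (\<lambda>U. S \<union> U) ` ?X"
    then obtain U where U: "U \<subseteq> {1..m} - S" "card U = d" "T = S \<union> U" by auto
    have "finite U" using U(1) finite_subset by blast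
    then have "card T = card S + d" using U fS by (subst U(3), subst card_Un_disjoint) auto
    then show "T \<in> {T. S \<subseteq> T \<and> T \<subseteq> {1..m} \<and> card T = card S + d}" using U assms(1) by auto
  qed
  then have "card ((\<lambda>U. S \<union> U) ` ?X) \<le> card {T. S \<subseteq> T \<and> T \<subseteq> {1..m} \<and> card T = card S + d}"
    by (intro card_mono) (auto intro: finite_subset[of _ "Pow {1..m}"])
  then show ?thesis using 1 card_image[OF inj] by simp
qed

lemma count_down:
  assumes "finite S" "d \<le> card S"
  shows "card S choose d \<le> card {T. T \<subseteq> S \<and> card T = card S - d}"
  using n_subsets[OF assms(1), of "card S - d"] binomial_symmetric[OF assms(2)] by simp

lemma binom_lb:
  assumes "(k + 1) * d \<le> (N::nat)"
  shows "(k + 1) ^ d \<le> N choose d"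
proof (cases "d = 0")
  case False
  have "real (k + 1) \<le> real N / real d" using assms False
    by (simp add: field_simps) (metis of_nat_le_iff of_nat_mult of_nat_add of_nat_1 mult.commute)
  then have "real (k+1) ^ d \<le> (real N / real d) ^ d" by (intro power_mono) auto
  also have "\<dots> \<le> real (N choose d)"
    by (rule binomial_ge_n_over_k_pow_k) (use assms False in \<open>auto intro: order_trans[OF _ assms]\<close>)
  finally show ?thesis by (metis of_nat_le_iff of_nat_power)
qed simp

lemma Gverts_finite: "finite (Gverts m k d)"
  by (rule finite_subset[of _ "{0..3*k} \<times> Pow {1..m}"]) (auto simp: Gverts_def)


lemma fwd_deg:
  assumes m4: "4 * k * d \<le> m" and v: "(i, S) \<in> Gverts m k d" and it: "i + Suc t \<le> 3 * k"
  shows "(k + 1) ^ d \<le> card {w. Gedge m k d (i, S) w \<and> (w \<in> Gverts m k d \<and> fst w + t \<le> 3 * k)}"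
    (is "_ \<le> card ?W")
proof -
  have fW: "finite ?W" by (rule finite_subset[OF _ Gverts_finite[of m k d]]) auto
  have Sm: "S \<subseteq> {1..m}" and cS: "card S = layer_size k d i" using v by (auto simp: Gverts_def)
  have fS: "finite S" using Sm finite_subset by blast
  show ?thesis
  proof (cases "i < 2 * k")
    case True
    let ?X = "{T. S \<subseteq> T \<and> T \<subseteq> {1..m} \<and> card T = card S + d}"
    have cS': "card S = i * d" using cS True by (simp add: layer_size_def)
    have ls: "layer_size k d (i + 1) = i * d + d"
    proof (cases "Suc i < 2*k")
      case False then have "Suc i = 2*k" using True by simp
      then have "4*k - Suc i = Suc i" by simp
      then show ?thesis using False by (simp add: layer_size_def)
    qed (simp add: layer_size_def)
    have "(i + k + 1) * d \<le> (3 * k) * d" using True by (intro mult_le_mono1) simp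
    also have "\<dots> \<le> m" using m4 by (simp add: mult.assoc)
    finally have b: "(i + k + 1) * d \<le> m" .
    have "(k + 1) ^ d \<le> (m - card S) choose d"
      by (rule binom_lb) (use b cS' in \<open>simp add: algebra_simps\<close>)
    also have "\<dots> \<le> card ?X" by (rule count_up[OF Sm]) (use b cS' in \<open>simp add: algebra_simps\<close>)
    also have "\<dots> = card ((\<lambda>T. (i + 1, T)) ` ?X)" by (simp add: card_image inj_on_def)
    also have "\<dots> \<le> card ?W"
    proof (intro card_mono[OF fW])
      show "(\<lambda>T. (i + 1, T)) ` ?X \<subseteq> ?W"
        using v it True cS' ls by (auto simp: Gedge_def Gverts_def)
    qed
    finally show ?thesis .
  next
    case False
    let ?X = "{T. T \<subseteq> S \<and> card T = card S - d}"
    have cS': "card S = (4 * k - i) * d" using cS False by (simp add: layer_size_def)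
    have ls: "layer_size k d (i + 1) = (4 * k - i) * d - d" using False
      by (simp add: layer_size_def diff_mult_distrib)
    have b: "(k + 1) * d \<le> card S" unfolding cS' using it by (intro mult_le_mono1) simp
    have "(k + 1) ^ d \<le> card S choose d" by (rule binom_lb[OF b])
    also have "\<dots> \<le> card ?X" by (rule count_down[OF fS]) (use b in simp)
    also have "\<dots> = card ((\<lambda>T. (i + 1, T)) ` ?X)" by (simp add: card_image inj_on_def)
    also have "\<dots> \<le> card ?W"
    proof (intro card_mono[OF fW])
      show "(\<lambda>T. (i + 1, T)) ` ?X \<subseteq> ?W"
        using v it False cS' ls Sm by (auto simp: Gedge_def Gverts_def)
    qed
    finally show ?thesis .
  qed
qed

lemma bwd_deg:
  assumes m4: "4 * k * d \<le> m" and v: "(j, S) \<in> Gverts m k d" and it: "k + Suc t \<le> j"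
  shows "(k + 1) ^ d \<le> card {w. Gedge m k d w (j, S) \<and> (w \<in> Gverts m k d \<and> k + t \<le> fst w)}"
    (is "_ \<le> card ?W")
proof -
  have fW: "finite ?W" by (rule finite_subset[OF _ Gverts_finite[of m k d]]) auto
  have Sm: "S \<subseteq> {1..m}" and cS: "card S = layer_size k d j" and j3: "j \<le> 3 * k"
    using v by (auto simp: Gverts_def)
  have fS: "finite S" using Sm finite_subset by blast
  obtain j' where j': "j = Suc j'" using it by (cases j) auto
  show ?thesis
  proof (cases "j \<le> 2 * k")
    case True
    let ?X = "{T. T \<subseteq> S \<and> card T = card S - d}"
    have cS': "card S = j * d" using cS True by (simp add: layer_size_def)
    have ls: "layer_size k d j' = j * d - d" using True j'
      by (simp add: layer_size_def)
    have b: "(k + 1) * d \<le> card S" unfolding cS' using it by (intro mult_le_mono1) simp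
    have "(k + 1) ^ d \<le> card S choose d" by (rule binom_lb[OF b])
    also have "\<dots> \<le> card ?X" by (rule count_down[OF fS]) (use b in simp)
    also have "\<dots> = card ((\<lambda>T. (j', T)) ` ?X)" by (simp add: card_image inj_on_def)
    also have "\<dots> \<le> card ?W"
    proof (intro card_mono[OF fW])
      show "(\<lambda>T. (j', T)) ` ?X \<subseteq> ?W"
        using v it True cS' ls Sm j' by (auto simp: Gedge_def Gverts_def)
    qed
    finally show ?thesis .
  next
    case False
    let ?X = "{T. S \<subseteq> T \<and> T \<subseteq> {1..m} \<and> card T = card S + d}"
    have cS': "card S = (4 * k - j) * d" using cS False by (simp add: layer_size_def)
    have e: "4*k - j' = Suc (4*k - j)" and n: "\<not> j' < 2 * k" using j' False j3 by auto
    have ls: "layer_size k d j' = (4 * k - j) * d + d"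
      using e n by (simp add: layer_size_def)
    have "(4 * k - j + k + 1) * d \<le> (3 * k) * d" using False j3 by (intro mult_le_mono1) arith
    also have "\<dots> \<le> m" using m4 by (simp add: mult.assoc)
    finally have b: "(4 * k - j + k + 1) * d \<le> m" .
    have "(k + 1) ^ d \<le> (m - card S) choose d"
      by (rule binom_lb) (use b cS' in \<open>simp add: algebra_simps\<close>)
    also have "\<dots> \<le> card ?X" by (rule count_up[OF Sm]) (use b cS' in \<open>simp add: algebra_simps\<close>)
    also have "\<dots> = card ((\<lambda>T. (j', T)) ` ?X)" by (simp add: card_image inj_on_def)
    also have "\<dots> \<le> card ?W"
    proof (intro card_mono[OF fW])
      show "(\<lambda>T. (j', T)) ` ?X \<subseteq> ?W"
        using v it False cS' ls j' by (auto simp: Gedge_def Gverts_def)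
    qed
    finally show ?thesis .
  qed
qed


lemma Gpaths_layer:
  assumes "p \<in> Gpaths m k d" shows "j < length p \<Longrightarrow> fst (p ! j) = fst (p ! 0) + j"
proof (induction j)
  case (Suc j)
  then have "Gedge m k d (p ! j) (p ! Suc j)" using assms by (auto simp: Gpaths_def)
  then show ?case using Suc by (auto simp: Gedge_def)
qed simp

lemma Gpaths_set:
  assumes "p \<in> Gpaths m k d" shows "set p \<subseteq> Gverts m k d"
proof
  fix x assume "x \<in> set p"
  then obtain j where j: "j < length p" "p ! j = x" by (auto simp: in_set_conv_nth)
  show "x \<in> Gverts m k d"
  proof (cases j)
    case 0
    then have "Gedge m k d (p ! j) (p ! Suc j)" using assms j by (auto simp: Gpaths_def)
    then show ?thesis using j by (auto simp: Gedge_def)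
  next
    case (Suc j')
    then have "Gedge m k d (p ! j') (p ! Suc j')" using assms j by (auto simp: Gpaths_def)
    then show ?thesis using j Suc by (auto simp: Gedge_def)
  qed
qed

lemma paths_at_finite: "finite (paths_at m k d v)"
proof (rule finite_subset)
  show "paths_at m k d v \<subseteq> {p. set p \<subseteq> Gverts m k d \<and> length p \<le> Suc (3 * k)}"
  proof
    fix p assume p: "p \<in> paths_at m k d v"
    then have pG: "p \<in> Gpaths m k d" by (simp add: paths_at_def)
    have "set p \<subseteq> Gverts m k d" by (rule Gpaths_set[OF pG])
    have l: "length p - 1 < length p" using pG by (auto simp: Gpaths_def)
    have "p ! (length p - 1) \<in> Gverts m k d" using Gpaths_set[OF pG] l by auto
    then have "fst (p ! (length p - 1)) \<le> 3 * k" by (auto simp: Gverts_def)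
    then have "length p \<le> Suc (3 * k)" using Gpaths_layer[OF pG l] by simp
    with \<open>set p \<subseteq> Gverts m k d\<close> show "p \<in> {p. set p \<subseteq> Gverts m k d \<and> length p \<le> Suc (3 * k)}" by simp
  qed
  show "finite {p. set p \<subseteq> Gverts m k d \<and> length p \<le> Suc (3 * k)}"
    by (rule finite_lists_length_le[OF Gverts_finite])
qed

lemma paths_bound:
  assumes m4: "4 * k * d \<le> m" and k1: "1 \<le> k" and v: "v \<in> Gverts m k d"
  shows "(k + 1) ^ (d * k) \<le> card (paths_at m k d v)"
proof -
  obtain i S where vi: "v = (i, S)" by (cases v)
  have i3: "i \<le> 3 * k" using v vi by (simp add: Gverts_def)
  have fA: "finite (Gverts m k d)" by (rule Gverts_finite)
  show ?thesis
  proof (cases "i \<le> 2 * k")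
    case True
    let ?P = "\<lambda>t w. w \<in> Gverts m k d \<and> fst w + t \<le> 3 * k"
    have "((k + 1) ^ d) ^ k \<le> card (walks (Gedge m k d) k v)"
    proof (rule walks_count[where P = ?P])
      show "\<And>u w. Gedge m k d u w \<Longrightarrow> w \<in> Gverts m k d" by (simp add: Gedge_def)
      fix t w assume "?P (Suc t) w"
      then show "(k + 1) ^ d \<le> card {x. Gedge m k d w x \<and> ?P t x}"
        using fwd_deg[OF m4, of "fst w" "snd w" t] by simp
    qed (use fA v vi True in auto)
    also have "\<dots> \<le> card (paths_at m k d v)"
    proof (rule card_mono[OF paths_at_finite])
      show "walks (Gedge m k d) k v \<subseteq> paths_at m k d v"
        using k1 by (auto simp: walks_def paths_at_def Gpaths_def)
    qed
    finally show ?thesis by (simp add: power_mult)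
  next
    case False
    let ?R = "\<lambda>a b. Gedge m k d b a"
    let ?P = "\<lambda>t w. w \<in> Gverts m k d \<and> k + t \<le> fst w"
    have "((k + 1) ^ d) ^ k \<le> card (walks ?R k v)"
    proof (rule walks_count[where P = ?P])
      show "\<And>u w. ?R u w \<Longrightarrow> w \<in> Gverts m k d" by (simp add: Gedge_def)
      fix t w assume "?P (Suc t) w"
      then show "(k + 1) ^ d \<le> card {x. ?R w x \<and> ?P t x}"
        using bwd_deg[OF m4, of "fst w" "snd w" t] by simp
    qed (use fA v vi False in auto)
    also have "\<dots> = card (rev ` walks ?R k v)" by (simp add: card_image)
    also have "\<dots> \<le> card (paths_at m k d v)"
    proof (rule card_mono[OF paths_at_finite])
      show "rev ` walks ?R k v \<subseteq> paths_at m k d v"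
      proof
        fix q assume "q \<in> rev ` walks ?R k v"
        then obtain p where p: "p \<in> walks ?R k v" "q = rev p" by auto
        have "\<forall>j. Suc j < length q \<longrightarrow> Gedge m k d (q ! j) (q ! Suc j)"
        proof safe
          fix j assume j: "Suc j < length q"
          let ?n = "length p"
          have "?R (p ! (?n - Suc (Suc j))) (p ! Suc (?n - Suc (Suc j)))"
            using p j by (auto simp: walks_def)
          moreover have "Suc (?n - Suc (Suc j)) = ?n - Suc j" using j p by simp
          ultimately show "Gedge m k d (q ! j) (q ! Suc j)"
            using p j by (simp add: rev_nth)
        qed
        moreover have "last q = v" using p
          by (auto simp: walks_def last_rev)
        moreover have "length q \<ge> 2" using p k1 by (auto simp: walks_def)
        ultimately show "q \<in> paths_at m k d v" by (simp add: paths_at_def Gpaths_def)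
      qed
    qed
    finally show ?thesis by (simp add: power_mult)
  qed
qed


lemma pow4_ge: "3 * m + 1 \<le> (4::nat) ^ m"
  by (induction m) auto

lemma Gverts_card: assumes "k \<le> m" shows "card (Gverts m k d) \<le> 8 ^ m"
proof -
  have "card (Gverts m k d) \<le> card ({0..3*k} \<times> Pow {1..m})"
    by (rule card_mono) (auto simp: Gverts_def)
  also have "\<dots> = (3 * k + 1) * 2 ^ m" by (simp add: card_cartesian_product card_Pow)
  also have "\<dots> \<le> 4 ^ m * 2 ^ m"
    using pow4_ge[of m] assms by (intro mult_le_mono1) linarith
  also have "\<dots> = 8 ^ m" by (simp flip: power_mult_distrib)
  finally show ?thesis .
qed

theorem lemma8:
  shows "\<exists>\<rho>0>0. \<forall>\<rho>::real. 0 < \<rho> \<and> \<rho> \<le> \<rho>0 \<longrightarrow>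
    (\<exists>c>0. \<exists>C::real. \<forall>m k d::nat.
       k \<ge> 1 \<and> real d = \<rho> * real m / real k \<and> real m \<ge> C \<and> real m / real k \<ge> C * ln (real m)
       \<longrightarrow> (\<forall>v \<in> Gverts m k d.
             real (card (paths_at m k d v)) \<ge> real (card (Gverts m k d)) powr (c * ln (real (3 * k)))))"
proof (rule exI[of _ "1/4::real"], rule conjI, simp, intro allI impI)
  fix \<rho> :: real assume \<rho>: "0 < \<rho> \<and> \<rho> \<le> 1/4"
  have main: "\<forall>m k d::nat.
       k \<ge> 1 \<and> real d = \<rho> * real m / real k \<and> real m \<ge> 1 \<and> real m / real k \<ge> 1 * ln (real m)
       \<longrightarrow> (\<forall>v \<in> Gverts m k d.
             real (card (paths_at m k d v)) \<ge> real (card (Gverts m k d)) powr ((\<rho>/9) * ln (real (3 * k))))"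
  proof (intro allI impI ballI)
    fix m k d :: nat and v
    assume H: "k \<ge> 1 \<and> real d = \<rho> * real m / real k \<and> real m \<ge> 1 \<and> real m / real k \<ge> 1 * ln (real m)"
      and v: "v \<in> Gverts m k d"
    have k1: "k \<ge> 1" and m1: "real m \<ge> 1" using H by auto
    have kpos: "real k > 0" using k1 by simp
    have dk: "real d * real k = \<rho> * real m" using H kpos by (simp add: field_simps)
    have "real d > 0" using H \<rho> kpos m1 by simp
    then have d1: "d \<ge> 1" by simp
    have "real (4 * k * d) = 4 * (real d * real k)" by simp
    also have "\<dots> \<le> real m" using dk \<rho> m1 by simp
    finally have m4: "4 * k * d \<le> m" by linarith
    have km: "k \<le> m"
    proof -
      have "k \<le> 4 * k * d" using d1 by simp
      then show ?thesis using m4 by linarith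
    qed
    let ?n = "card (Gverts m k d)"
    have n1: "?n \<ge> 1" using v Gverts_finite[of m k d] by (metis One_nat_def Suc_leI card_gt_0_iff empty_iff)
    have n8: "real ?n \<le> 8 ^ m" using Gverts_card[OF km] by (metis of_nat_le_iff of_nat_numeral of_nat_power)
    have l8: "ln (8::real) = 3 * ln 2" using ln_realpow[of 2 3] by simp
    have "ln (real ?n) \<le> ln (8 ^ m)" using n1 n8 by simp
    also have "\<dots> = real m * ln 8" by (rule ln_realpow)
    also have "\<dots> = real m * (3 * ln 2)" by (simp only: l8)
    also have "\<dots> \<le> real m * 3" using ln_2_less_1 m1 by simp
    finally have lnn: "ln (real ?n) \<le> 3 * real m" by simp
    have lnn0: "0 \<le> ln (real ?n)" using n1 by simp
    have "real (3 * k) \<le> real ((k + 1) ^ 3)"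
      by (simp only: of_nat_le_iff) (simp add: power3_eq_cube algebra_simps)
    then have "ln (real (3 * k)) \<le> ln (real ((k + 1) ^ 3))" using k1 by simp
    also have "\<dots> = 3 * ln (real (k + 1))" by (simp add: ln_realpow)
    finally have lk: "ln (real (3 * k)) \<le> 3 * ln (real (k + 1))" .
    have lk0: "0 \<le> ln (real (3 * k))" using k1 by simp
    have "real ?n powr ((\<rho>/9) * ln (real (3 * k))) = exp ((\<rho>/9) * (ln (real (3 * k)) * ln (real ?n)))"
      using n1 by (simp add: powr_def)
    also have "\<dots> \<le> exp ((\<rho>/9) * ((3 * ln (real (k + 1))) * (3 * real m)))"
      using \<rho> lk lnn lk0 lnn0 by (intro exp_mono mult_left_mono mult_mono) auto
    also have "\<dots> = exp (ln (real (k + 1)) * (\<rho> * real m))" by (simp add: algebra_simps)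
    also have "\<dots> = real (k + 1) powr (real (d * k))" using dk by (simp add: powr_def)
    also have "\<dots> = real ((k + 1) ^ (d * k))"
      using powr_realpow[of "real (k + 1)" "d * k"] by (simp only: of_nat_power)
    also have "\<dots> \<le> real (card (paths_at m k d v))"
      using paths_bound[OF m4 k1 v] by (simp only: of_nat_le_iff)
    finally show "real (card (paths_at m k d v)) \<ge> real ?n powr ((\<rho>/9) * ln (real (3 * k)))" .
  qed
  have "\<rho>/9 > 0" using \<rho> by simp
  then show "\<exists>c>0. \<exists>C::real. \<forall>m k d::nat.
       k \<ge> 1 \<and> real d = \<rho> * real m / real k \<and> real m \<ge> C \<and> real m / real k \<ge> C * ln (real m)
       \<longrightarrow> (\<forall>v \<in> Gverts m k d.
             real (card (paths_at m k d v)) \<ge> real (card (Gverts m k d)) powr (c * ln (real (3 * k))))"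
    using main by - (rule exI[of _ "\<rho>/9"], rule conjI, assumption, rule exI[of _ 1], assumption)
qed

end
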